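(* Let $\mathbf{F}$ be a $\pi$-tree on a topological space $X$ and let $\alpha:\omega\to\omega$ be strictly increasing. Then there is a $\pi$-tree $\mathbf{H}$ on $X$ such that $\alpha[\mathrm{rise}_{\mathbf{F}}(p,U)]\subseteq\mathrm{rise}_{\mathbf{H}}(p,U)$ for all $p\in X$ and all neighbourhoods $U$ of $p$ in $X$.
   Context: Neighbourhoods are not necessarily open. $\omega=\{0,1,2,\dots\}$, ${}^{<\omega}\omega$ is the set of finite sequences of natural numbers. A tree is a strict partial order in which the set of predecessors of every node is well-ordered; $\mathrm{height}(x)$ is the ordinal isomorphic to the set of predecessors of $x$; a branch is a maximal chain; $\mathrm{sons}(x)$ is the set of immediate successors of $x$; $0$ denotes the least node. A foliage tree is a pair $\mathbf{F}=(T,l)$ with $T$ a tree (skeleton) and $l$ a function on its nodes, $\mathbf{F}_x:=l(x)$; tree notions apply via the skeleton. $\mathrm{shoot}_{\mathbf{F}}(v)=\{\bigcup_{x\in C}\mathbf{F}_x: C\text{ a cofinite subset of }\mathrm{sons}_{\mathbf{F}}(v)\}$; $\mathrm{scope}_{\mathbf{F}}(p)=\{x:p\in\mathbf{F}_x\}$. For families $\gamma,\delta$ of sets, $\gamma\gg\delta$ means every nonempty $D\in\delta$ contains some nonempty $G\in\gamma$. $\mathrm{rise}_{\mathbf{F}}(p,U)=\{\mathrm{height}_{\mathbf{F}}(v): v\in\mathrm{scope}_{\mathbf{F}}(p),\ \mathrm{shoot}_{\mathbf{F}}(v)\gg\{U\}\}$. $\mathbf{F}$ is locally strict if each non-maximal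 leaf $\mathbf{F}_x$ is the disjoint union of $\mathbf{F}_s$, $s\in\mathrm{sons}(x)$; has strict branches if it has a node and for each branch $B$, $\bigcap_{x\in B}\mathbf{F}_x$ is a singleton; is open in $X$ if all leaves are open in $X$; is a foliage $\omega,\omega$-tree if its skeleton is order-isomorphic to $({}^{<\omega}\omega,\subsetneq)$. A Baire foliage tree on $X$ is an open in $X$, locally strict foliage $\omega,\omega$-tree with strict branches and $\mathbf{F}_{0_{\mathbf{F}}}=X$. $\mathbf{F}$ grows into $X$ if for every $p\in X$ and neighbourhood $U$ of $p$ there is $z\in\mathrm{scope}_{\mathbf{F}}(p)$ with $\mathrm{shoot}_{\mathbf{F}}(z)\gg\{U\}$. A $\pi$-tree on $X$ is a Baire foliage tree on $X$ that grows into $X$. *)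

theory Defs
  imports "HOL-Analysis.Analysis" "HOL-Library.Sublist"
begin

text \<open>A foliage omega,omega-tree is represented with its skeleton taken to be
  (nat list, strict prefix), i.e. the canonical copy of the finite sequences of
  natural numbers ordered by strict extension; the foliage is the labelling
  function F :: nat list => 'a set.  The root is the empty list, the height of
  a node is its length, and the sons of v are the lists v @ [n].\<close>

type_synonym 'a foliage = "nat list \<Rightarrow> 'a set"

definition sons :: "nat list \<Rightarrow> nat list set" where
  "sons v = {s. strict_prefix v s \<and> length s = Suc (length v)}"

definition height :: "nat list \<Rightarrow> nat" where
  "height v = card {u. strict_prefix u v}"

definition is_branch :: "nat list set \<Rightarrow> bool" where
  "is_branch B \<longleftrightarrow>
     (\<forall>x\<in>B. \<forall>y\<in>B. x = y \<or> strict_prefix x y \<or> strict_prefix y x) \<and>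
     (\<forall>C. B \<subseteq> C \<and> (\<forall>x\<in>C. \<forall>y\<in>C. x = y \<or> strict_prefix x y \<or> strict_prefix y x) \<longrightarrow> C = B)"

definition shoot :: "'a foliage \<Rightarrow> nat list \<Rightarrow> 'a set set" where
  "shoot F v = {\<Union>x\<in>C. F x | C. C \<subseteq> sons v \<and> finite (sons v - C)}"

definition scope :: "'a foliage \<Rightarrow> 'a \<Rightarrow> nat list set" where
  "scope F p = {x. p \<in> F x}"

definition refines :: "'a set set \<Rightarrow> 'a set set \<Rightarrow> bool" (infix "\<ggreater>" 50) where
  "\<gamma> \<ggreater> \<delta> \<longleftrightarrow> (\<forall>D\<in>\<delta>. D \<noteq> {} \<longrightarrow> (\<exists>G\<in>\<gamma>. G \<noteq> {} \<and> G \<subseteq> D))"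

definition rise :: "'a foliage \<Rightarrow> 'a \<Rightarrow> 'a set \<Rightarrow> nat set" where
  "rise F p U = {height v | v. v \<in> scope F p \<and> shoot F v \<ggreater> {U}}"

text \<open>Neighbourhoods need not be open.\<close>
definition nbhd :: "'a topology \<Rightarrow> 'a \<Rightarrow> 'a set \<Rightarrow> bool" where
  "nbhd X p U \<longleftrightarrow> U \<subseteq> topspace X \<and> (\<exists>V. openin X V \<and> p \<in> V \<and> V \<subseteq> U)"

definition locally_strict :: "'a foliage \<Rightarrow> bool" where
  "locally_strict F \<longleftrightarrow>
     (\<forall>x. F x = (\<Union>s\<in>sons x. F s) \<and>
          (\<forall>s\<in>sons x. \<forall>t\<in>sons x. s \<noteq> t \<longrightarrow> F s \<inter> F t = {}))"

definition strict_branches :: "'a foliage \<Rightarrow> bool" where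
  "strict_branches F \<longleftrightarrow> (\<forall>B. is_branch B \<longrightarrow> (\<exists>p. (\<Inter>x\<in>B. F x) = {p}))"

definition open_foliage :: "'a topology \<Rightarrow> 'a foliage \<Rightarrow> bool" where
  "open_foliage X F \<longleftrightarrow> (\<forall>x. openin X (F x))"

definition baire_foliage_tree :: "'a topology \<Rightarrow> 'a foliage \<Rightarrow> bool" where
  "baire_foliage_tree X F \<longleftrightarrow>
     open_foliage X F \<and> locally_strict F \<and> strict_branches F \<and> F [] = topspace X"

definition grows_into :: "'a topology \<Rightarrow> 'a foliage \<Rightarrow> bool" where
  "grows_into X F \<longleftrightarrow>
     (\<forall>p\<in>topspace X. \<forall>U. nbhd X p U \<longrightarrow> (\<exists>z\<in>scope F p. shoot F z \<ggreater> {U}))"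

definition pi_tree :: "'a topology \<Rightarrow> 'a foliage \<Rightarrow> bool" where
  "pi_tree X F \<longleftrightarrow> baire_foliage_tree X F \<and> grows_into X F"

end

theory Submission
  imports Defs "HOL-Library.Nat_Bijection"
begin

lemma sons_eq: "sons v = range (\<lambda>n. v @ [n])"
proof -
  have "s \<in> sons v \<longleftrightarrow> (\<exists>n. s = v @ [n])" for s
  proof
    assume "s \<in> sons v"
    then obtain t where "s = v @ t" "length t = 1" unfolding sons_def
      by (auto simp: strict_prefix_def prefix_def)
    then show "\<exists>n. s = v @ [n]" by (cases t) auto
  qed (auto simp: sons_def strict_prefix_def)
  then show ?thesis by auto
qed

lemma height_eq: "height v = length v"
proof -
  have "{u. strict_prefix u v} = set (prefixes v) - {v}"
    by (auto simp: strict_prefix_def)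
  then show ?thesis unfolding height_def by (simp add: card_Diff_singleton)
qed

lemma ls_union: assumes "locally_strict F" shows "F x = (\<Union>n. F (x @ [n]))"
proof -
  have "F x = (\<Union>s\<in>sons x. F s)" using assms unfolding locally_strict_def by blast
  also have "\<dots> = (\<Union>n. F (x @ [n]))" unfolding sons_eq by (simp add: image_comp)
  finally show ?thesis .
qed

lemma ls_disj: assumes "locally_strict F" "a \<noteq> b" shows "F (x @ [a]) \<inter> F (x @ [b]) = {}"
proof -
  have "\<forall>s\<in>sons x. \<forall>t\<in>sons x. s \<noteq> t \<longrightarrow> F s \<inter> F t = {}" using assms(1) unfolding locally_strict_def by blast
  moreover have "x @ [a] \<in> sons x" "x @ [b] \<in> sons x" unfolding sons_eq by auto
  moreover have "x @ [a] \<noteq> x @ [b]" using assms(2) by simp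
  ultimately show ?thesis by blast
qed

lemma ls_sub: "locally_strict F \<Longrightarrow> F (x @ [n]) \<subseteq> F x"
  using ls_union by blast

lemma ls_same_len:
  assumes "locally_strict F" "p \<in> F x" "p \<in> F y" "length x = length y"
  shows "x = y"
  using assms(2-4)
proof (induction x arbitrary: y rule: rev_induct)
  case Nil then show ?case by simp
next
  case (snoc a x)
  then obtain y' b where y: "y = y' @ [b]" by (metis length_0_conv rev_exhaust snoc_eq_iff_butlast)
  have "p \<in> F x" using snoc.prems(1) ls_sub[OF assms(1), of x a] by blast
  moreover have "p \<in> F y'" using snoc.prems(2) y ls_sub[OF assms(1), of y' b] by blast
  moreover have "length x = length y'" using snoc.prems(3) y by simp
  ultimately have "x = y'" by (rule snoc.IH)
  show ?case
  proof (rule ccontr)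
    assume "x @ [a] \<noteq> y"
    then have "a \<noteq> b" using y \<open>x = y'\<close> by simp
    then have "F (x @ [a]) \<inter> F (x @ [b]) = {}" by (rule ls_disj[OF assms(1)])
    moreover have "p \<in> F (x @ [a])" "p \<in> F (x @ [b])" using snoc.prems y \<open>x = y'\<close> by auto
    ultimately show False by blast
  qed
qed


definition chain_l :: "nat list set \<Rightarrow> bool" where
  "chain_l B \<longleftrightarrow> (\<forall>x\<in>B. \<forall>y\<in>B. x = y \<or> strict_prefix x y \<or> strict_prefix y x)"

lemma chain_l_prefix: "chain_l B \<Longrightarrow> x \<in> B \<Longrightarrow> y \<in> B \<Longrightarrow> prefix x y \<or> prefix y x"
proof -
  assume "chain_l B" "x \<in> B" "y \<in> B"
  then have "x = y \<or> strict_prefix x y \<or> strict_prefix y x" unfolding chain_l_def by blast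
  then show ?thesis unfolding strict_prefix_def by auto
qed

lemma prefix_length_eq: "length a = length b \<Longrightarrow> prefix a b \<Longrightarrow> a = b"
  by (auto simp: prefix_def)

lemma pre_len: assumes "prefix a b \<or> prefix b a" "length a \<le> length b" shows "prefix a b"
proof (cases "prefix a b")
  case False
  then have "prefix b a" using assms by blast
  then have "length b \<le> length a" by (rule prefix_length_le)
  then have "a = b" using prefix_length_eq[OF _ \<open>prefix b a\<close>] assms(2) by simp
  then show ?thesis by simp
qed

lemma snoc_of_len: assumes "length v = Suc (length u)" "take (length u) v = u" shows "\<exists>a. v = u @ [a]"
proof -
  have "v = u @ drop (length u) v" using assms(2) by (metis append_take_drop_id)
  moreover have "length (drop (length u) v) = 1" using assms(1) by simp
  ultimately show ?thesis by (metis length_0_conv length_Suc_conv One_nat_def)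
qed

lemma is_branch_alt: "is_branch B \<longleftrightarrow> chain_l B \<and> (\<forall>C. B \<subseteq> C \<and> chain_l C \<longrightarrow> C = B)"
  unfolding is_branch_def chain_l_def by (rule refl)

lemma branch_insert: assumes "is_branch B" "chain_l (insert x B)" shows "x \<in> B"
proof -
  have mx: "\<forall>C. B \<subseteq> C \<and> chain_l C \<longrightarrow> C = B" using assms(1) unfolding is_branch_alt by (rule conjunct2)
  have "B \<subseteq> insert x B \<and> chain_l (insert x B)" using assms(2) by blast
  then have "insert x B = B" using mx by (elim allE[of _ "insert x B"]) (rule mp)
  then show ?thesis by blast
qed

lemma chain_l_insert:
  assumes "chain_l B" "\<And>y. y \<in> B \<Longrightarrow> prefix x y \<or> prefix y x"
  shows "chain_l (insert x B)"
  using assms unfolding chain_l_def by (auto simp: strict_prefix_def)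

lemma chain_y:
  assumes "y 0 = []" "\<And>m. \<exists>a. y (Suc m) = y m @ [a]"
  shows "length (y m) = m" and "m \<le> k \<Longrightarrow> prefix (y m) (y k)"
proof -
  show "length (y m) = m"
  proof (induction m)
    case (Suc m)
    then show ?case using assms(2)[of m] by auto
  qed (use assms in auto)
  show "m \<le> k \<Longrightarrow> prefix (y m) (y k)"
  proof (induction k)
    case 0 then show ?case by simp
  next
    case (Suc k)
    obtain a where "y (Suc k) = y k @ [a]" using assms(2) by blast
    show ?case
    proof (cases "m = Suc k")
      case False
      then have "prefix (y m) (y k)" using Suc by simp
      moreover have "prefix (y k) (y (Suc k))" using \<open>y (Suc k) = y k @ [a]\<close> by simp
      ultimately show ?thesis by (rule prefix_order.order_trans)
    qed simp
  qed
qed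

lemma branch_of_y:
  assumes "y 0 = []" "\<And>m. \<exists>a. y (Suc m) = y m @ [a]"
  shows "is_branch (range y)"
proof -
  note L = chain_y[OF assms]
  have ch: "chain_l (range y)"
    unfolding chain_l_def
  proof (intro ballI)
    fix u v assume "u \<in> range y" "v \<in> range y"
    then obtain i j where "u = y i" "v = y j" by auto
    then show "u = v \<or> strict_prefix u v \<or> strict_prefix v u"
    proof (cases "i \<le> j")
      case True
      then have "prefix (y i) (y j)" by (rule L(2))
      then show ?thesis using \<open>u = y i\<close> \<open>v = y j\<close> by (auto simp: strict_prefix_def)
    next
      case False
      then have "prefix (y j) (y i)" by (intro L(2)) simp
      then show ?thesis using \<open>u = y i\<close> \<open>v = y j\<close> by (auto simp: strict_prefix_def)
    qed
  qed
  moreover have mx: "C = range y" if "range y \<subseteq> C" "chain_l C" for C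
  proof
    show "C \<subseteq> range y"
    proof
      fix c assume "c \<in> C"
      have "y (length c) \<in> C" using that by auto
      then have "prefix c (y (length c)) \<or> prefix (y (length c)) c"
        using chain_l_prefix[OF that(2) \<open>c \<in> C\<close>] by auto
      then have "prefix c (y (length c))" by (rule pre_len) (simp add: L(1))
      then have "c = y (length c)" by (rule prefix_length_eq[rotated]) (simp add: L(1))
      then show "c \<in> range y" by (metis rangeI)
    qed
  qed (use that in auto)
  ultimately show ?thesis unfolding is_branch_alt
  proof (intro conjI allI impI)
    fix C assume "range y \<subseteq> C \<and> chain_l C"
    then show "C = range y" using mx by blast
  qed
qed

lemma branch_closed:
  assumes "is_branch B" "b \<in> B" "prefix u b" shows "u \<in> B"
proof -
  have c: "chain_l B" using assms(1) unfolding is_branch_alt by (rule conjunct1)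
  have "chain_l (insert u B)"
  proof (rule chain_l_insert[OF c])
    fix y assume "y \<in> B"
    then have "prefix b y \<or> prefix y b" using chain_l_prefix[OF c assms(2)] by auto
    then show "prefix u y \<or> prefix y u"
      using assms(3) prefix_same_cases[of u b y] prefix_order.order_trans[of u b y] by blast
  qed
  then show ?thesis by (rule branch_insert[OF assms(1)])
qed

lemma branch_long:
  assumes "is_branch B" shows "\<exists>b\<in>B. n \<le> length b"
proof (induction n)
  case 0
  have c: "chain_l B" using assms(1) unfolding is_branch_alt by (rule conjunct1)
  have "chain_l (insert [] B)" by (rule chain_l_insert[OF c]) simp
  then have "[] \<in> B" by (rule branch_insert[OF assms(1)])
  then show ?case by auto
next
  case (Suc n)
  show ?case
  proof (rule ccontr)
    assume "\<not> ?thesis"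
    then have sm: "\<And>b. b \<in> B \<Longrightarrow> length b \<le> n" using not_less_eq_eq by blast
    obtain b where b: "b \<in> B" "n \<le> length b" using Suc by blast
    have c: "chain_l B" using assms(1) unfolding is_branch_alt by (rule conjunct1)
    have "chain_l (insert (b @ [0]) B)"
    proof (rule chain_l_insert[OF c])
      fix y assume "y \<in> B"
      then have "prefix b y \<or> prefix y b" using chain_l_prefix[OF c b(1)] by auto
      moreover have "length y \<le> length b" using sm[OF \<open>y \<in> B\<close>] b(2) by linarith
      ultimately have "prefix y b" using pre_len[of y b] by blast
      then show "prefix (b @ [0]) y \<or> prefix y (b @ [0])" by auto
    qed
    then have "b @ [0] \<in> B" by (rule branch_insert[OF assms(1)])
    then have "length (b @ [0]) \<le> n" by (rule sm)
    then show False using b(2) by simp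
  qed
qed

lemma branch_y:
  assumes "is_branch B"
  obtains y where "y 0 = []" "\<And>m. \<exists>a. y (Suc m) = y m @ [a]" "B = range y"
proof -
  have c: "chain_l B" using assms(1) unfolding is_branch_alt by (rule conjunct1)
  have ex: "\<exists>b\<in>B. length b = m" for m
  proof -
    obtain b where "b \<in> B" "m \<le> length b" using branch_long[OF assms] by blast
    then have "take m b \<in> B" using branch_closed[OF assms, of b "take m b"] by (auto simp: take_is_prefix)
    then show ?thesis using \<open>m \<le> length b\<close> by (metis length_take min_absorb2)
  qed
  have un: "b = b'" if "b \<in> B" "b' \<in> B" "length b = length b'" for b b'
  proof -
    have "prefix b b' \<or> prefix b' b" using chain_l_prefix[OF c that(1,2)] .
    then show ?thesis using prefix_length_eq[of b b'] prefix_length_eq[of b' b] that(3) by auto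
  qed
  define y where "y m = (SOME b. b \<in> B \<and> length b = m)" for m
  have y: "y m \<in> B \<and> length (y m) = m" for m
    unfolding y_def by (rule someI_ex) (use ex in blast)
  have Y0: "y 0 = []" using y[of 0] by simp
  have Y1: "\<exists>a. y (Suc m) = y m @ [a]" for m
  proof -
    have "take m (y (Suc m)) \<in> B" using branch_closed[OF assms y[of "Suc m", THEN conjunct1]]
      by (simp add: take_is_prefix)
    then have "take m (y (Suc m)) = y m" by (rule un) (use y in auto)
    then show ?thesis using y[of "Suc m"] y[of m] snoc_of_len[of "y (Suc m)" "y m"] by simp
  qed
  have Y2: "B = range y"
  proof
    show "B \<subseteq> range y"
    proof
      fix b assume "b \<in> B"
      then have "b = y (length b)" by (rule un) (use y in auto)
      then show "b \<in> range y" by (metis rangeI)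
    qed
  qed (use y in auto)
  show ?thesis using Y0 Y1 Y2 by (rule that)
qed


type_synonym state = "nat list \<times> (nat \<Rightarrow> nat)"

definition stepf :: "(nat \<Rightarrow> nat) \<Rightarrow> nat \<Rightarrow> state \<Rightarrow> nat \<Rightarrow> state" where
  "stepf \<alpha> h st c = (if h \<in> range \<alpha> then (fst st @ [snd st c], id)
      else (fst st, snd st \<circ> (\<lambda>t. prod_encode (c, t))))"

fun stp :: "(nat \<Rightarrow> nat) \<Rightarrow> nat \<Rightarrow> nat list \<Rightarrow> state \<Rightarrow> state" where
  "stp \<alpha> h [] st = st"
| "stp \<alpha> h (c # cs) st = stp \<alpha> (Suc h) cs (stepf \<alpha> h st c)"

lemma stp_snoc: "stp \<alpha> h (s @ [c]) st = stepf \<alpha> (h + length s) (stp \<alpha> h s st) c"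
  by (induction s arbitrary: h st) auto

definition st :: "(nat \<Rightarrow> nat) \<Rightarrow> nat list \<Rightarrow> state" where
  "st \<alpha> s = stp \<alpha> 0 s ([], id)"

lemma st_Nil[simp]: "st \<alpha> [] = ([], id)" by (simp add: st_def)

lemma st_snoc: "st \<alpha> (s @ [c]) = stepf \<alpha> (length s) (st \<alpha> s) c"
  by (simp add: st_def stp_snoc)

definition HH :: "(nat \<Rightarrow> nat) \<Rightarrow> 'a foliage \<Rightarrow> 'a foliage" where
  "HH \<alpha> F s = (\<Union>t. F (fst (st \<alpha> s) @ [snd (st \<alpha> s) t]))"

lemma st_inj: "inj (snd (st \<alpha> s))"
proof (induction s rule: rev_induct)
  case (snoc c s)
  have "inj (\<lambda>t::nat. prod_encode (c, t))" by (auto simp: inj_def prod_encode_eq)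
  then show ?case using snoc inj_compose[of "snd (st \<alpha> s)" "\<lambda>t. prod_encode (c, t)"]
    by (auto simp: st_snoc stepf_def comp_def)
qed simp

lemma st_prefix1: "prefix (fst (st \<alpha> s)) (fst (st \<alpha> (s @ [c])))"
  by (auto simp: st_snoc stepf_def)

lemma st_prefix: "prefix (fst (st \<alpha> s)) (fst (st \<alpha> (s @ u)))"
proof (induction u rule: rev_induct)
  case (snoc c u)
  then show ?case using st_prefix1[of \<alpha> "s @ u" c] by (metis append_assoc prefix_order.order_trans)
qed simp

lemma st_len:
  assumes "strict_mono \<alpha>"
  shows "length (fst (st \<alpha> s)) = card {m. \<alpha> m < length s}"
proof (induction s rule: rev_induct)
  case Nil then show ?case by simp
next
  case (snoc c s)
  have fin: "finite {m. \<alpha> m < h}" for h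
  proof (rule finite_subset[of _ "{..<h}"])
    show "{m. \<alpha> m < h} \<subseteq> {..<h}" using strict_mono_imp_increasing[OF assms] by (auto intro: le_less_trans)
  qed simp
  show ?case
  proof (cases "length s \<in> range \<alpha>")
    case True
    then obtain m0 where m0: "\<alpha> m0 = length s" by auto
    have "{m. \<alpha> m < length (s @ [c])} = insert m0 {m. \<alpha> m < length s}"
    proof -
      have X: "x = m0" if "\<alpha> x = length s" for x
      proof -
        have "\<alpha> x = \<alpha> m0" using that m0 by simp
        then show ?thesis using strict_mono_eq[OF assms, of x m0] by simp
      qed
      show ?thesis
      proof (intro set_eqI iffI)
        fix m assume "m \<in> {m. \<alpha> m < length (s @ [c])}"
        then have "\<alpha> m < length s \<or> \<alpha> m = length s" by auto
        then show "m \<in> insert m0 {m. \<alpha> m < length s}" using X[of m] by blast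
      next
        fix m assume "m \<in> insert m0 {m. \<alpha> m < length s}"
        then show "m \<in> {m. \<alpha> m < length (s @ [c])}" using m0 by auto
      qed
    qed
    then show ?thesis using snoc True fin m0 by (simp add: st_snoc stepf_def)
  next
    case False
    have "{m. \<alpha> m < length (s @ [c])} = {m. \<alpha> m < length s}"
      using False by (auto simp: less_Suc_eq image_iff) (metis)
    then show ?thesis using snoc False by (simp add: st_snoc stepf_def)
  qed
qed

lemma HH_snoc:
  "HH \<alpha> F (s @ [c]) = (\<Union>t. F (fst (st \<alpha> s) @ [snd (st \<alpha> s)
      (if length s \<in> range \<alpha> then c else prod_encode (c, t))]))" (is "_ = ?R")
  if "locally_strict F"
proof (cases "length s \<in> range \<alpha>")
  case True
  then show ?thesis unfolding HH_def using ls_union[OF that, of "fst (st \<alpha> s) @ [snd (st \<alpha> s) c]"]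
    by (simp add: st_snoc stepf_def)
next
  case False
  then show ?thesis unfolding HH_def by (simp add: st_snoc stepf_def)
qed

lemma HH_union: assumes "locally_strict F" shows "HH \<alpha> F s = (\<Union>c. HH \<alpha> F (s @ [c]))"
proof -
  let ?g = "\<lambda>c t. if length s \<in> range \<alpha> then c else prod_encode (c, t)"
  have "\<exists>c t. u = ?g c t" for u
  proof (cases "length s \<in> range \<alpha>")
    case True
    then show ?thesis by (intro exI[of _ u] exI[of _ 0]) simp
  next
    case False
    obtain c t where ct: "prod_decode u = (c, t)" by (cases "prod_decode u")
    have "u = prod_encode (c, t)" using prod_decode_inverse[of u] ct by simp
    then show ?thesis using False by (intro exI[of _ c] exI[of _ t]) simp
  qed
  note G = this
  show ?thesis
  proof
    show "HH \<alpha> F s \<subseteq> (\<Union>c. HH \<alpha> F (s @ [c]))"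
    proof
      fix q assume "q \<in> HH \<alpha> F s"
      then have "q \<in> (\<Union>u. F (fst (st \<alpha> s) @ [snd (st \<alpha> s) u]))" by (simp only: HH_def)
      then obtain u where q: "q \<in> F (fst (st \<alpha> s) @ [snd (st \<alpha> s) u])" by (elim UN_E)
      obtain c t where "u = ?g c t" using G by blast
      then have "q \<in> F (fst (st \<alpha> s) @ [snd (st \<alpha> s) (?g c t)])" using q by simp
      then have "q \<in> HH \<alpha> F (s @ [c])" unfolding HH_snoc[OF assms] by (rule UN_I[OF UNIV_I])
      then show "q \<in> (\<Union>c. HH \<alpha> F (s @ [c]))" by (rule UN_I[OF UNIV_I])
    qed
    show "(\<Union>c. HH \<alpha> F (s @ [c])) \<subseteq> HH \<alpha> F s"
    proof (rule UN_least)
      fix c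
      have "HH \<alpha> F (s @ [c]) = (\<Union>t. F (fst (st \<alpha> s) @ [snd (st \<alpha> s) (?g c t)]))" by (rule HH_snoc[OF assms])
      also have "\<dots> \<subseteq> HH \<alpha> F s" unfolding HH_def by (rule UN_least) (rule UN_upper[OF UNIV_I])
      finally show "HH \<alpha> F (s @ [c]) \<subseteq> HH \<alpha> F s" .
    qed
  qed
qed

lemma HH_disj: assumes "locally_strict F" "c \<noteq> c'" shows "HH \<alpha> F (s @ [c]) \<inter> HH \<alpha> F (s @ [c']) = {}"
proof -
  have i: "inj (snd (st \<alpha> s))" by (rule st_inj)
  have "snd (st \<alpha> s) (if length s \<in> range \<alpha> then c else prod_encode (c, t)) \<noteq>
        snd (st \<alpha> s) (if length s \<in> range \<alpha> then c' else prod_encode (c', t'))" for t t'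
    using assms(2) i by (auto simp: inj_eq prod_encode_eq)
  then have D: "F (fst (st \<alpha> s) @ [snd (st \<alpha> s) (if length s \<in> range \<alpha> then c else prod_encode (c, t))]) \<inter>
        F (fst (st \<alpha> s) @ [snd (st \<alpha> s) (if length s \<in> range \<alpha> then c' else prod_encode (c', t'))]) = {}" for t t'
    by (rule ls_disj[OF assms(1)])
  show ?thesis unfolding HH_snoc[OF assms(1)]
  proof (rule equals0I)
    fix q assume "q \<in> (\<Union>t. F (fst (st \<alpha> s) @ [snd (st \<alpha> s) (if length s \<in> range \<alpha> then c else prod_encode (c, t))])) \<inter>
        (\<Union>t. F (fst (st \<alpha> s) @ [snd (st \<alpha> s) (if length s \<in> range \<alpha> then c' else prod_encode (c', t))]))"
    then obtain t t' where "q \<in> F (fst (st \<alpha> s) @ [snd (st \<alpha> s) (if length s \<in> range \<alpha> then c else prod_encode (c, t))])"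
      "q \<in> F (fst (st \<alpha> s) @ [snd (st \<alpha> s) (if length s \<in> range \<alpha> then c' else prod_encode (c', t'))])"
      by (elim IntE UN_E)
    then show False using D[of t t'] by blast
  qed
qed

lemma HH_ls: assumes "locally_strict F" shows "locally_strict (HH \<alpha> F)"
  unfolding locally_strict_def
proof (intro allI conjI ballI impI)
  fix x
  have "(\<Union>s\<in>sons x. HH \<alpha> F s) = (\<Union>c. HH \<alpha> F (x @ [c]))" unfolding sons_eq by (simp only: image_image)
  then show "HH \<alpha> F x = (\<Union>s\<in>sons x. HH \<alpha> F s)" using HH_union[OF assms, of \<alpha> x] by (simp only:)
  fix s t assume "s \<in> sons x" "t \<in> sons x" "s \<noteq> t"
  then obtain a b where ab: "s = x @ [a]" "t = x @ [b]" "a \<noteq> b" unfolding sons_eq by blast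
  have "HH \<alpha> F (x @ [a]) \<inter> HH \<alpha> F (x @ [b]) = {}" by (rule HH_disj[OF assms ab(3)])
  then show "HH \<alpha> F s \<inter> HH \<alpha> F t = {}" using ab by (simp only:)
qed

lemma HH_sub_F: assumes "locally_strict F" shows "HH \<alpha> F s \<subseteq> F (fst (st \<alpha> s))"
  unfolding HH_def by (rule UN_least) (rule ls_sub[OF assms])

lemma HH_id: assumes "locally_strict F" "snd (st \<alpha> s) = id" shows "HH \<alpha> F s = F (fst (st \<alpha> s))"
  unfolding HH_def assms(2) id_apply by (rule ls_union[OF assms(1), symmetric])

lemma HH_snoc_sub: assumes "locally_strict F" shows "HH \<alpha> F (s @ [c]) \<subseteq> HH \<alpha> F s"
proof -
  have "HH \<alpha> F (s @ [c]) \<subseteq> (\<Union>c. HH \<alpha> F (s @ [c]))" by (rule UN_upper[OF UNIV_I])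
  also have "\<dots> = HH \<alpha> F s" by (rule HH_union[OF assms, symmetric])
  finally show ?thesis .
qed

lemma HH_mono: assumes "locally_strict F" shows "HH \<alpha> F (s @ u) \<subseteq> HH \<alpha> F s"
proof (induction u rule: rev_induct)
  case (snoc c u)
  have "HH \<alpha> F (s @ u @ [c]) \<subseteq> HH \<alpha> F (s @ u)" using HH_snoc_sub[OF assms, of \<alpha> "s @ u" c] by simp
  then show ?case using snoc by simp
qed simp

lemma HH_root: assumes "locally_strict F" shows "HH \<alpha> F [] = F []"
  using HH_id[OF assms, of \<alpha> "[]"] by simp

lemma HH_path: assumes "locally_strict F" "p \<in> HH \<alpha> F []" shows "\<exists>s. length s = h \<and> p \<in> HH \<alpha> F s"
proof (induction h)
  case 0 then show ?case using assms by auto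
next
  case (Suc h)
  then obtain s where s: "length s = h" "p \<in> HH \<alpha> F s" by blast
  then have "p \<in> (\<Union>c. HH \<alpha> F (s @ [c]))" using HH_union[OF assms(1), of \<alpha> s] by (simp only:)
  then obtain c where "p \<in> HH \<alpha> F (s @ [c])" by (elim UN_E)
  then show ?case using s(1) by (intro exI[of _ "s @ [c]"]) simp
qed

lemma HH_open: assumes "open_foliage X F" shows "open_foliage X (HH \<alpha> F)"
  using assms unfolding open_foliage_def HH_def by (intro allI openin_Union) auto


lemma F_nonempty: assumes "strict_branches F" shows "F x \<noteq> {}"
proof -
  define f where "f i = (if i < length x then x ! i else 0)" for i
  define y where "y m = map f [0..<m]" for m
  have br: "is_branch (range y)" by (rule branch_of_y) (auto simp: y_def)
  have "x = y (length x)" unfolding y_def f_def by (rule nth_equalityI) auto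
  then have "x \<in> range y" by (metis rangeI)
  obtain p where "(\<Inter>z\<in>range y. F z) = {p}" using assms br unfolding strict_branches_def by blast
  then show ?thesis using \<open>x \<in> range y\<close> by blast
qed

lemma HH_sb:
  assumes ls: "locally_strict F" and sb: "strict_branches F" and am: "strict_mono \<alpha>"
  shows "strict_branches (HH \<alpha> F)"
  unfolding strict_branches_def
proof (intro allI impI)
  fix B assume "is_branch B"
  then obtain y where y0: "y 0 = []" and ys: "\<And>m. \<exists>a. y (Suc m) = y m @ [a]" and B: "B = range y"
    using branch_y by metis
  note Y = chain_y[OF y0 ys]
  define \<beta> where "\<beta> m = (case m of 0 \<Rightarrow> 0 | Suc k \<Rightarrow> Suc (\<alpha> k))" for m
  have bmono: "\<beta> m \<le> \<beta> (Suc m)" for m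
    using am by (cases m) (auto simp: \<beta>_def strict_mono_less_eq)
  have bge: "m \<le> \<beta> m" for m
    using strict_mono_imp_increasing[OF am] by (cases m) (auto simp: \<beta>_def)
  define z where "z m = fst (st \<alpha> (y (\<beta> m)))" for m
  have lenb: "card {j. \<alpha> j < \<beta> m} = m" for m
  proof (cases m)
    case (Suc k)
    have "{j. \<alpha> j < \<beta> m} = {..k}" using am Suc by (auto simp: \<beta>_def strict_mono_less_eq less_Suc_eq_le)
    then show ?thesis using Suc by simp
  qed (simp add: \<beta>_def)
  have zlen: "length (z m) = m" for m
    unfolding z_def st_len[OF am] Y(1) lenb ..
  have zid: "snd (st \<alpha> (y (\<beta> m))) = id" for m
  proof (cases m)
    case 0 then show ?thesis by (simp add: \<beta>_def y0)
  next
    case (Suc k)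
    obtain a where "y (Suc (\<alpha> k)) = y (\<alpha> k) @ [a]" using ys by blast
    then show ?thesis using Suc Y(1) by (simp add: \<beta>_def st_snoc stepf_def)
  qed
  have zH: "HH \<alpha> F (y (\<beta> m)) = F (z m)" for m
    unfolding z_def using HH_id[OF ls zid] .
  have z0: "z 0 = []" using zlen[of 0] by simp
  have zs: "\<exists>a. z (Suc m) = z m @ [a]" for m
  proof -
    obtain u where "y (\<beta> (Suc m)) = y (\<beta> m) @ u" using Y(2)[OF bmono] prefix_def by blast
    then have "prefix (z m) (z (Suc m))" unfolding z_def using st_prefix by metis
    then obtain v where v: "z (Suc m) = z m @ v" using prefix_def by blast
    then have "length v = 1" using zlen[of m] zlen[of "Suc m"] by simp
    then show ?thesis using v by (cases v) auto
  qed
  obtain p where p: "(\<Inter>x\<in>range z. F x) = {p}"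
    using sb branch_of_y[OF z0 zs] unfolding strict_branches_def by blast
  have "(\<Inter>x\<in>B. HH \<alpha> F x) = (\<Inter>x\<in>range z. F x)"
  proof
    show "(\<Inter>x\<in>B. HH \<alpha> F x) \<subseteq> (\<Inter>x\<in>range z. F x)"
    proof (rule subsetI, rule INT_I)
      fix q zz assume q: "q \<in> (\<Inter>x\<in>B. HH \<alpha> F x)" and "zz \<in> range z"
      then obtain m where m: "zz = z m" by blast
      have "y (\<beta> m) \<in> B" unfolding B by (rule rangeI)
      then have "q \<in> HH \<alpha> F (y (\<beta> m))" by (rule INT_D[OF q])
      then show "q \<in> F zz" unfolding m zH .
    qed
    show "(\<Inter>x\<in>range z. F x) \<subseteq> (\<Inter>x\<in>B. HH \<alpha> F x)"
    proof
      fix q assume q: "q \<in> (\<Inter>x\<in>range z. F x)"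
      have "q \<in> HH \<alpha> F (y n)" for n
      proof -
        obtain u where "y (\<beta> n) = y n @ u" using Y(2)[OF bge] prefix_def by blast
        then have "HH \<alpha> F (y (\<beta> n)) \<subseteq> HH \<alpha> F (y n)" using HH_mono[OF ls] by metis
        then show ?thesis using q zH[of n] by blast
      qed
      then show "q \<in> (\<Inter>x\<in>B. HH \<alpha> F x)" unfolding B by (intro INT_I) (elim rangeE, simp)
    qed
  qed
  then have "(\<Inter>x\<in>B. HH \<alpha> F x) = {p}" using p by (rule trans)
  then show "\<exists>p. (\<Inter>x\<in>B. HH \<alpha> F x) = {p}" by (rule exI)
qed


lemma HH_rise:
  assumes ls: "locally_strict F" and sb: "strict_branches F" and root: "F [] = topspace X"
    and am: "strict_mono \<alpha>" and p: "p \<in> topspace X" and U: "nbhd X p U" and n: "n \<in> rise F p U"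
  shows "\<alpha> n \<in> rise (HH \<alpha> F) p U"
proof -
  from n obtain w where w: "n = height w" "w \<in> scope F p" "shoot F w \<ggreater> {U}"
    unfolding rise_def by blast
  have pw: "p \<in> F w" using w(2) unfolding scope_def by simp
  have lw: "length w = n" using w(1) height_eq by simp
  have "U \<noteq> {}" using U unfolding nbhd_def by blast
  then obtain G where G: "G \<in> shoot F w" "G \<noteq> {}" "G \<subseteq> U"
    using w(3) unfolding refines_def by blast
  then obtain C where C: "G = (\<Union>x\<in>C. F x)" "C \<subseteq> sons w" "finite (sons w - C)"
    unfolding shoot_def by blast
  have "p \<in> HH \<alpha> F []" using HH_root[OF ls, of \<alpha>] root p by simp
  then obtain s where s: "length s = \<alpha> n" "p \<in> HH \<alpha> F s" using HH_path[OF ls] by blast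
  define x where "x = fst (st \<alpha> s)"
  define e where "e = snd (st \<alpha> s)"
  have "{m. \<alpha> m < \<alpha> n} = {..<n}" using strict_mono_less[OF am] by auto
  then have lx: "length x = n" unfolding x_def st_len[OF am] s(1) by simp
  have "p \<in> F x" using HH_sub_F[OF ls, of \<alpha> s] s(2) unfolding x_def by blast
  then have xw: "x = w" using ls_same_len[OF ls _ pw] lx lw by simp
  have ie: "inj e" unfolding e_def by (rule st_inj)
  have inr: "length s \<in> range \<alpha>" using s(1) by simp
  have Hc: "HH \<alpha> F (s @ [c]) = F (w @ [e c])" for c
    using HH_snoc[OF ls, of \<alpha> s c] inr unfolding x_def[symmetric] e_def[symmetric] xw by simp
  define C' where "C' = {s @ [c] | c. w @ [e c] \<in> C}"
  have C'sub: "C' \<subseteq> sons s" unfolding C'_def sons_eq by blast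
  have injw: "inj (\<lambda>c. w @ [e c])" using ie by (auto simp: inj_def)
  have "(\<lambda>c. w @ [e c]) ` {c. w @ [e c] \<notin> C} \<subseteq> sons w - C" unfolding sons_eq by blast
  then have "finite ((\<lambda>c. w @ [e c]) ` {c. w @ [e c] \<notin> C})" using C(3) finite_subset by blast
  then have finc: "finite {c. w @ [e c] \<notin> C}"
    using finite_imageD injw inj_on_subset subset_UNIV by blast
  have "sons s - C' \<subseteq> (\<lambda>c. s @ [c]) ` {c. w @ [e c] \<notin> C}" unfolding C'_def sons_eq by blast
  then have finC': "finite (sons s - C')" using finc finite_subset by blast
  have "{c. w @ [e c] \<in> C} \<noteq> {}"
  proof
    assume "{c. w @ [e c] \<in> C} = {}"
    then have "{c. w @ [e c] \<notin> C} = UNIV" by blast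
    then show False using finc by simp
  qed
  then obtain c0 where c0: "w @ [e c0] \<in> C" by blast
  have sub: "(\<Union>y\<in>C'. HH \<alpha> F y) \<subseteq> U"
  proof (rule UN_least)
    fix y assume "y \<in> C'"
    then obtain c where "y = s @ [c]" "w @ [e c] \<in> C" unfolding C'_def by blast
    then have "HH \<alpha> F y \<subseteq> G" unfolding C(1) using Hc[of c] by blast
    then show "HH \<alpha> F y \<subseteq> U" using G(3) by blast
  qed
  have "s @ [c0] \<in> C'" unfolding C'_def using c0 by blast
  moreover have "HH \<alpha> F (s @ [c0]) \<noteq> {}" unfolding Hc by (rule F_nonempty[OF sb])
  ultimately have ne: "(\<Union>y\<in>C'. HH \<alpha> F y) \<noteq> {}" by blast
  have sh: "(\<Union>y\<in>C'. HH \<alpha> F y) \<in> shoot (HH \<alpha> F) s"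
    unfolding shoot_def by (rule CollectI, rule exI[of _ C'], intro conjI refl C'sub finC')
  have rf: "shoot (HH \<alpha> F) s \<ggreater> {U}" unfolding refines_def
  proof (intro ballI impI)
    fix D assume "D \<in> {U}"
    then have "D = U" by simp
    then show "\<exists>G\<in>shoot (HH \<alpha> F) s. G \<noteq> {} \<and> G \<subseteq> D"
      using sh ne sub by (intro bexI[of _ "\<Union>y\<in>C'. HH \<alpha> F y"]) simp_all
  qed
  have sc: "s \<in> scope (HH \<alpha> F) p" unfolding scope_def using s(2) by simp
  have hs: "\<alpha> n = height s" using s(1) height_eq by simp
  show ?thesis unfolding rise_def
    by (rule CollectI, rule exI[of _ s], intro conjI hs sc rf)
qed

theorem lemma14:
  fixes X :: "'a topology" and F :: "'a foliage" and \<alpha> :: "nat \<Rightarrow> nat"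
  assumes "pi_tree X F" and "strict_mono \<alpha>"
  shows "\<exists>H. pi_tree X H \<and>
           (\<forall>p\<in>topspace X. \<forall>U. nbhd X p U \<longrightarrow> \<alpha> ` rise F p U \<subseteq> rise H p U)"
proof -
  have op: "open_foliage X F" and ls: "locally_strict F" and sb: "strict_branches F"
    and root: "F [] = topspace X" and gr: "grows_into X F"
    using assms(1) unfolding pi_tree_def baire_foliage_tree_def by auto
  note R = HH_rise[OF ls sb root assms(2)]
  have incl: "\<forall>p\<in>topspace X. \<forall>U. nbhd X p U \<longrightarrow> \<alpha> ` rise F p U \<subseteq> rise (HH \<alpha> F) p U"
    using R by blast
  have "baire_foliage_tree X (HH \<alpha> F)"
    unfolding baire_foliage_tree_def
    using HH_open[OF op] HH_ls[OF ls] HH_sb[OF ls sb assms(2)] HH_root[OF ls] root by simp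
  moreover have "grows_into X (HH \<alpha> F)"
    unfolding grows_into_def
  proof (intro ballI allI impI)
    fix p U assume p: "p \<in> topspace X" and U: "nbhd X p U"
    then obtain z where z: "z \<in> scope F p" "shoot F z \<ggreater> {U}" using gr unfolding grows_into_def by blast
    then have "height z \<in> rise F p U" unfolding rise_def by blast
    then have "\<alpha> (height z) \<in> rise (HH \<alpha> F) p U" by (rule R[OF p U])
    then show "\<exists>z\<in>scope (HH \<alpha> F) p. shoot (HH \<alpha> F) z \<ggreater> {U}" unfolding rise_def by blast
  qed
  ultimately have "pi_tree X (HH \<alpha> F)" unfolding pi_tree_def by blast
  then show ?thesis using incl by blast
qed

end
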